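(* Let $0<\sigma<1$ and $F_{n,\sigma}=\sum_{\kappa/\lambda\in\mathcal F_n}\frac{\cos(2\pi\kappa/\lambda)}{(\kappa\lambda)^\sigma}$. Then $$F_{n,\sigma}=\frac{n^{2(1-\sigma)}}{2(1-\sigma)\zeta(2)}\int_0^1\frac{\cos2\pi t}{t^\sigma}dt+O_\sigma\big(n^{1-\sigma}\big).$$
   Context: $\mathcal F_n=\{j/m: 1\le j\le m\le n,\ \gcd(j,m)=1\}$ is the Farey series of order $n$ (fractions in lowest terms, including $1/1$). $\zeta$ is the Riemann zeta function. *)

theory Defs
  imports "HOL-Analysis.Analysis"
begin

text \<open>Farey series of order n, as pairs (j, m) representing j/m in lowest terms,
  1 <= j <= m <= n, gcd(j, m) = 1 (includes 1/1).\<close>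
definition farey :: "nat \<Rightarrow> (nat \<times> nat) set" where
  "farey n = {(j, m). 1 \<le> j \<and> j \<le> m \<and> m \<le> n \<and> coprime j m}"

definition zeta2 :: real where
  "zeta2 = (\<Sum>k. 1 / (real (Suc k))\<^sup>2)"

definition F_sum :: "nat \<Rightarrow> real \<Rightarrow> real" where
  "F_sum n \<sigma> = (\<Sum>(j, m)\<in>farey n. cos (2 * pi * real j / real m) / (real j * real m) powr \<sigma>)"

end

theory Submission
  imports Defs "HOL-Computational_Algebra.Squarefree"
begin

definition mu :: "nat \<Rightarrow> real" where
  "mu d = (if squarefree d then (-1) ^ card (prime_factors d) else 0)"

lemma mu_abs_le: "\<bar>mu d\<bar> \<le> 1"
  by (simp add: mu_def)

lemma mu_1 [simp]: "mu 1 = 1"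
  by (simp add: mu_def)

lemma mu_Suc0 [simp]: "mu (Suc 0) = 1"
  using mu_1 by (simp only: One_nat_def)

lemma mu_mult_prime:
  assumes p: "prime p" and nd: "\<not> p dvd d" and d0: "d > 0"
  shows "mu (p * d) = - mu d"
proof (cases "squarefree d")
  case True
  have cop: "coprime p d" using prime_imp_coprime[OF p nd] .
  have sq: "squarefree (p * d)"
    using squarefree_mult_coprime[of p d] True cop squarefree_prime[OF p] by auto
  have pf: "prime_factors (p * d) = insert p (prime_factors d)"
    using prime_factors_product[of p d] p d0 by (auto simp: prime_prime_factors)
  have "p \<notin> prime_factors d" using nd by auto
  then have "card (prime_factors (p * d)) = Suc (card (prime_factors d))"
    using pf by simp
  then show ?thesis using True sq by (simp add: mu_def)
next
  case False
  then have "\<not> squarefree (p * d)" using squarefree_mono[of d "p * d"] by auto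
  then show ?thesis using False by (simp add: mu_def)
qed

lemma mu_sum_dvd:
  assumes n: "n > 0"
  shows "(\<Sum>d | d dvd n. mu d) = (if n = 1 then 1 else 0)"
proof (cases "n = 1")
  case True
  then show ?thesis by simp
next
  case False
  obtain p where p: "prime p" "p dvd n" using prime_factor_nat[OF False] by blast
  define D where "D = {d. d dvd n}"
  define D0 where "D0 = {d\<in>D. \<not> p dvd d}"
  define D1 where "D1 = {d\<in>D. p dvd d}"
  have finD: "finite D" unfolding D_def using n by simp
  have D01: "D = D0 \<union> D1" "D0 \<inter> D1 = {}" unfolding D0_def D1_def by auto
  have sD: "sum mu D = sum mu D0 + sum mu D1"
    using D01 finD by (metis D0_def D1_def finite_Un sum.union_disjoint)
  have img: "(\<lambda>d. p * d) ` D0 \<subseteq> D1"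
  proof
    fix x assume "x \<in> (\<lambda>d. p * d) ` D0"
    then obtain d where d: "d \<in> D0" "x = p * d" by blast
    have "coprime p d" using prime_imp_coprime[OF p(1)] d(1) by (auto simp: D0_def)
    then have "p * d dvd n" using divides_mult[of p n d] p d(1) by (auto simp: D0_def D_def)
    then show "x \<in> D1" using d by (auto simp: D1_def D_def)
  qed
  have inj: "inj_on (\<lambda>d. p * d) D0" using p(1) by (auto simp: inj_on_def prime_gt_0_nat)
  have rest: "mu x = 0" if "x \<in> D1 - (\<lambda>d. p * d) ` D0" for x
  proof -
    from that have x: "x dvd n" "p dvd x" "x \<notin> (\<lambda>d. p * d) ` D0" by (auto simp: D1_def D_def)
    obtain y where y: "x = p * y" using x(2) by blast
    have "y dvd n" using x(1) y by auto
    then have "p dvd y" using x(3) y by (auto simp: D0_def D_def)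
    then have "p ^ 2 dvd x" using y by (auto simp: power2_eq_square)
    then have "\<not> squarefree x" using p(1) by (metis not_prime_unit not_squarefreeI)
    then show ?thesis by (simp add: mu_def)
  qed
  have "sum mu D1 = sum mu ((\<lambda>d. p * d) ` D0) + sum mu (D1 - (\<lambda>d. p * d) ` D0)"
    using img finD by (metis D1_def add.commute finite_subset mem_Collect_eq subsetI sum.subset_diff)
  also have "sum mu (D1 - (\<lambda>d. p * d) ` D0) = 0" using rest by simp
  also have "sum mu ((\<lambda>d. p * d) ` D0) = sum (\<lambda>d. mu (p * d)) D0"
    using sum.reindex[OF inj] by simp
  also have "\<dots> = sum (\<lambda>d. - mu d) D0"
  proof (rule sum.cong)
    fix d assume "d \<in> D0"
    then have "\<not> p dvd d" "d > 0" using n by (auto simp: D0_def D_def intro: Nat.gr0I)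
    then show "mu (p * d) = - mu d" using mu_mult_prime[OF p(1)] by blast
  qed simp
  finally have "sum mu D1 = - sum mu D0" by (simp add: sum_negf)
  then show ?thesis using sD False by (simp add: D_def)
qed

lemma mu_inversion:
  fixes A :: "'a set" and g :: "'a \<Rightarrow> nat" and a :: "'a \<Rightarrow> real"
  assumes A: "finite A" and g: "\<And>x. x \<in> A \<Longrightarrow> 1 \<le> g x \<and> g x \<le> n"
  shows "(\<Sum>d=1..n. mu d * (\<Sum>x\<in>{x\<in>A. d dvd g x}. a x)) = (\<Sum>x\<in>{x\<in>A. g x = 1}. a x)"
proof -
  have key: "(\<Sum>d=1..n. if d dvd g x then mu d else 0) = (if g x = 1 then 1 else 0)"
    if x: "x \<in> A" for x
  proof -
    have "(\<Sum>d=1..n. if d dvd g x then mu d else 0) = (\<Sum>d\<in>{1..n} \<inter> {d. d dvd g x}. mu d)"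
      by (simp add: sum.inter_restrict)
    also have "{1..n} \<inter> {d. d dvd g x} = {d. d dvd g x}"
    proof -
      have "1 \<le> e \<and> e \<le> n" if "e dvd g x" for e
      proof -
        have "0 < g x" using g[OF x] by simp
        then have "0 < e" "e \<le> g x" using that dvd_pos_nat dvd_imp_le by blast+
        then show ?thesis using g[OF x] by simp
      qed
      then show ?thesis by auto
    qed
    also have "(\<Sum>d | d dvd g x. mu d) = (if g x = 1 then 1 else 0)"
      using g[OF x] by (intro mu_sum_dvd) auto
    finally show ?thesis .
  qed
  have "(\<Sum>x\<in>{x\<in>A. g x = 1}. a x) = (\<Sum>x\<in>A. (if g x = 1 then 1 else 0) * a x)"
    using A by (subst sum.inter_filter) (auto intro: sum.cong)
  also have "\<dots> = (\<Sum>x\<in>A. (\<Sum>d=1..n. if d dvd g x then mu d else 0) * a x)"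
    using key by (intro sum.cong) auto
  also have "\<dots> = (\<Sum>x\<in>A. \<Sum>d=1..n. if d dvd g x then mu d * a x else 0)"
    by (auto simp: sum_distrib_right intro!: sum.cong)
  also have "\<dots> = (\<Sum>d=1..n. \<Sum>x\<in>A. if d dvd g x then mu d * a x else 0)"
    by (rule sum.swap)
  also have "\<dots> = (\<Sum>d=1..n. mu d * (\<Sum>x\<in>{x\<in>A. d dvd g x}. a x))"
    using A by (auto simp: sum.inter_filter sum_distrib_left intro!: sum.cong)
  finally show ?thesis by simp
qed

definition fj :: "real \<Rightarrow> nat \<Rightarrow> nat \<Rightarrow> real" where
  "fj s j m = cos (2 * pi * real j / real m) / (real j * real m) powr s"

definition pairs :: "nat \<Rightarrow> (nat \<times> nat) set" where
  "pairs N = {(j, m). 1 \<le> j \<and> j \<le> m \<and> m \<le> N}"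

definition G :: "real \<Rightarrow> nat \<Rightarrow> real" where
  "G s N = (\<Sum>(j, m)\<in>pairs N. fj s j m)"

lemma finite_pairs [simp]: "finite (pairs N)"
proof -
  have "pairs N \<subseteq> {..N} \<times> {..N}" by (auto simp: pairs_def)
  then show ?thesis by (rule finite_subset) auto
qed

lemma fj_scale:
  assumes "d > 0"
  shows "fj s (d * j) (d * m) = fj s j m / real d powr (2 * s)"
proof -
  have A: "2 * pi * real (d * j) / real (d * m) = 2 * pi * real j / real m" using assms by simp
  have B: "(real (d * j) * real (d * m)) powr s = real d powr (2 * s) * (real j * real m) powr s"
  proof -
    have "(real (d * j) * real (d * m)) = (real d * real d) * (real j * real m)" by simp
    then have C: "(real (d * j) * real (d * m)) powr s = (real d * real d) powr s * (real j * real m) powr s"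
      by (metis powr_mult mult_nonneg_nonneg of_nat_0_le_iff)
    have "(real d * real d) powr s = real d powr s * real d powr s" by (rule powr_mult; simp)
    also have "\<dots> = real d powr (s + s)" by (rule powr_add[symmetric])
    also have "\<dots> = real d powr (2 * s)" by simp
    finally have D: "(real d * real d) powr s = real d powr (2 * s)" .
    show ?thesis unfolding C D by (rule refl)
  qed
  have "fj s (d * j) (d * m) = cos (2 * pi * real j / real m) / (real d powr (2 * s) * (real j * real m) powr s)"
    by (simp only: fj_def A B)
  also have "\<dots> = fj s j m / real d powr (2 * s)"
  proof -
    have E: "c / (x * y) = (c / y) / x" for c x y :: real by (simp only: divide_divide_eq_left mult.commute)
    show ?thesis unfolding fj_def by (rule E)
  qed
  finally show ?thesis .
qed

lemma pairs_dvd: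
  assumes d: "d > 0"
  shows "{x \<in> pairs n. d dvd gcd (fst x) (snd x)} = (\<lambda>(j, m). (d * j, d * m)) ` pairs (n div d)"
proof (rule set_eqI, rule iffI)
  fix x assume x: "x \<in> {x \<in> pairs n. d dvd gcd (fst x) (snd x)}"
  obtain j m where xjm: "x = (j, m)" by fastforce
  have jm: "1 \<le> j" "j \<le> m" "m \<le> n" "d dvd j" "d dvd m" using x xjm by (auto simp: pairs_def)
  then obtain j' m' where jm': "j = d * j'" "m = d * m'" by (meson dvdE)
  have "1 \<le> j'" using jm jm' by (cases j') auto
  moreover have "j' \<le> m'" using jm jm' d by simp
  moreover have "m' \<le> n div d" using jm jm' d
    by (simp add: less_eq_div_iff_mult_less_eq mult.commute)
  ultimately have "(j', m') \<in> pairs (n div d)" by (simp add: pairs_def)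
  then show "x \<in> (\<lambda>(j, m). (d * j, d * m)) ` pairs (n div d)"
    using jm' xjm by force
next
  fix x assume "x \<in> (\<lambda>(j, m). (d * j, d * m)) ` pairs (n div d)"
  then obtain j m where x: "x = (d * j, d * m)" "(j, m) \<in> pairs (n div d)" by auto
  then have "1 \<le> j" "j \<le> m" "m \<le> n div d" by (auto simp: pairs_def)
  then have "1 \<le> d * j" "d * j \<le> d * m" "d * m \<le> n" using d
    by (auto simp: less_eq_div_iff_mult_less_eq mult.commute)
  then show "x \<in> {x \<in> pairs n. d dvd gcd (fst x) (snd x)}" using x by (simp add: pairs_def)
qed

lemma F_inv:
  assumes n: "n \<ge> 1"
  shows "F_sum n s = (\<Sum>d=1..n. mu d * (G s (n div d) / real d powr (2 * s)))"
proof -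
  have fa: "farey n = {x \<in> pairs n. gcd (fst x) (snd x) = 1}"
    by (auto simp: farey_def pairs_def coprime_iff_gcd_eq_1)
  have "F_sum n s = (\<Sum>x\<in>{x \<in> pairs n. gcd (fst x) (snd x) = 1}. fj s (fst x) (snd x))"
    unfolding F_sum_def fa by (simp add: fj_def case_prod_beta)
  also have "\<dots> = (\<Sum>d=1..n. mu d * (\<Sum>x\<in>{x \<in> pairs n. d dvd gcd (fst x) (snd x)}. fj s (fst x) (snd x)))"
  proof (rule mu_inversion[symmetric])
    fix x assume "x \<in> pairs n"
    then show "1 \<le> gcd (fst x) (snd x) \<and> gcd (fst x) (snd x) \<le> n"
      by (auto simp: pairs_def Suc_le_eq intro: order.trans[OF gcd_le1_nat])
  qed simp
  also have "\<dots> = (\<Sum>d=1..n. mu d * (G s (n div d) / real d powr (2 * s)))"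
  proof (rule sum.cong[OF refl])
    fix d assume "d \<in> {1..n}"
    then have d: "d > 0" by auto
    have inj: "inj_on (\<lambda>(j, m). (d * j, d * m)) (pairs (n div d))"
      using d by (auto simp: inj_on_def)
    have "(\<Sum>x\<in>{x \<in> pairs n. d dvd gcd (fst x) (snd x)}. fj s (fst x) (snd x))
        = (\<Sum>x\<in>pairs (n div d). fj s (d * fst x) (d * snd x))"
      unfolding pairs_dvd[OF d] by (subst sum.reindex[OF inj]) (simp add: case_prod_beta)
    also have "\<dots> = G s (n div d) / real d powr (2 * s)"
      unfolding G_def by (simp add: fj_scale[OF d] case_prod_beta sum_divide_distrib)
    finally show "mu d * (\<Sum>x\<in>{x \<in> pairs n. d dvd gcd (fst x) (snd x)}. fj s (fst x) (snd x))
        = mu d * (G s (n div d) / real d powr (2 * s))" by simp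
  qed
  finally show ?thesis .
qed

lemma powr_neg_has_integral:
  fixes \<sigma> c :: real
  assumes s: "0 < \<sigma>" "\<sigma> < 1" and c: "c \<ge> 0"
  shows "((\<lambda>x. x powr (- \<sigma>)) has_integral (c powr (1 - \<sigma>) / (1 - \<sigma>))) {0..c}"
  using has_integral_powr_from_0[of "- \<sigma>" c] s c by simp

lemma h_bound:
  assumes "x \<ge> 0"
  shows "\<bar>cos (2 * pi * x / c) / x powr \<sigma>\<bar> \<le> x powr (- \<sigma>)"
proof (cases "x = 0")
  case True
  then show ?thesis by simp
next
  case False
  then have "x powr \<sigma> > 0" using assms by simp
  then have "\<bar>cos (2 * pi * x / c) / x powr \<sigma>\<bar> = \<bar>cos (2 * pi * x / c)\<bar> / x powr \<sigma>" by simp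
  also have "\<dots> \<le> 1 / x powr \<sigma>" using \<open>x powr \<sigma> > 0\<close> by (intro divide_right_mono) auto
  also have "\<dots> = x powr (- \<sigma>)" by (simp add: powr_minus_divide)
  finally show ?thesis .
qed

lemma h_integrable_LBINT:
  assumes s: "0 < \<sigma>" "\<sigma> < 1"
  shows "(\<lambda>t. cos (2 * pi * t) / t powr \<sigma>) integrable_on {0..1}"
    "(LBINT t=0..1. cos (2 * pi * t) / t powr \<sigma>) = integral {0..1} (\<lambda>t. cos (2 * pi * t) / t powr \<sigma>)"
proof -
  have "(\<lambda>x. x powr (- \<sigma>)) integrable_on {0..1}"
    using powr_neg_has_integral[OF s, of 1] by (auto simp: integrable_on_def)
  then have "(\<lambda>x. x powr (- \<sigma>)) absolutely_integrable_on {0..1}"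
    by (intro nonnegative_absolutely_integrable_1) auto
  then have "integrable lebesgue (\<lambda>x. indicator {0..1} x *\<^sub>R x powr (- \<sigma>))"
    by (simp add: set_integrable_def)
  moreover have meas: "(\<lambda>x. indicator {0..1} x *\<^sub>R x powr (- \<sigma>)) \<in> borel_measurable lborel"
    by measurable
  ultimately have i1: "integrable lborel (\<lambda>x::real. indicator {0..1} x *\<^sub>R x powr (- \<sigma>))"
    using integrable_completion by blast
  have "integrable lborel (\<lambda>x::real. indicator {0..1} x *\<^sub>R (cos (2 * pi * x) / x powr \<sigma>))"
  proof (rule Bochner_Integration.integrable_bound[OF i1])
    show "(\<lambda>x::real. indicator {0..1} x *\<^sub>R (cos (2 * pi * x) / x powr \<sigma>)) \<in> borel_measurable lborel"
      by measurable
    show "AE x in lborel. norm (indicator {0..1} x *\<^sub>R (cos (2 * pi * x) / x powr \<sigma>))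
       \<le> norm (indicator {0..1} x *\<^sub>R x powr (- \<sigma>))"
    proof (rule AE_I2)
      fix x :: real
      show "norm (indicator {0..1} x *\<^sub>R (cos (2 * pi * x) / x powr \<sigma>))
       \<le> norm (indicator {0..1} x *\<^sub>R x powr (- \<sigma>))"
        using h_bound[of x 1 \<sigma>] by (auto simp: indicator_def)
    qed
  qed
  then have si: "set_integrable lborel {0..1} (\<lambda>t. cos (2 * pi * t) / t powr \<sigma>)"
    by (simp add: set_integrable_def)
  show "(\<lambda>t. cos (2 * pi * t) / t powr \<sigma>) integrable_on {0..1}"
    using set_borel_integral_eq_integral(1)[OF si] .
  show "(LBINT t=0..1. cos (2 * pi * t) / t powr \<sigma>) = integral {0..1} (\<lambda>t. cos (2 * pi * t) / t powr \<sigma>)"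
    using interval_integral_eq_integral[OF _ si] by (simp add: zero_ereal_def one_ereal_def)
qed

lemma abs_cos_diff_le:
  fixes a b :: real
  shows "\<bar>cos a - cos b\<bar> \<le> \<bar>a - b\<bar>"
proof -
  have "\<bar>cos a - cos b\<bar> = 2 * \<bar>sin ((a + b) / 2)\<bar> * \<bar>sin ((b - a) / 2)\<bar>"
    by (simp add: cos_diff_cos abs_mult)
  also have "\<dots> \<le> 2 * 1 * \<bar>(b - a) / 2\<bar>"
    by (intro mult_mono abs_sin_x_le_abs_x) auto
  finally show ?thesis by simp
qed

lemma g_has_integral:
  fixes c :: real
  assumes s: "0 < \<sigma>" "\<sigma> < 1" and c: "c > 0"
  shows "((\<lambda>x. cos (2 * pi * x / c) / x powr \<sigma>) has_integral
          (c powr (1 - \<sigma>) * integral {0..1} (\<lambda>t. cos (2 * pi * t) / t powr \<sigma>))) {0..c}"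
proof -
  define I where "I = integral {0..1} (\<lambda>t. cos (2 * pi * t) / t powr \<sigma>)"
  have "((\<lambda>t. cos (2 * pi * t) / t powr \<sigma>) has_integral I) (cbox 0 1)"
    unfolding I_def using h_integrable_LBINT(1)[OF s] by auto
  from has_integral_affinity'[OF this, of "1 / c" 0]
  have "((\<lambda>x. cos (2 * pi * (x / c)) / (x / c) powr \<sigma>) has_integral (c * I)) {0..c}"
    using c by simp
  then have "((\<lambda>x. c powr (- \<sigma>) * (cos (2 * pi * (x / c)) / (x / c) powr \<sigma>)) has_integral
       (c powr (- \<sigma>) * (c * I))) {0..c}"
    by (rule has_integral_mult_right)
  moreover have "c powr (- \<sigma>) * (c * I) = c powr (1 - \<sigma>) * I"
  proof -
    have "c powr (1 - \<sigma>) = c powr (- \<sigma> + 1)" by simp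
    also have "\<dots> = c powr (- \<sigma>) * c powr 1" by (rule powr_add)
    also have "\<dots> = c powr (- \<sigma>) * c" using c by simp
    finally show ?thesis by (simp add: mult.assoc[symmetric])
  qed
  moreover have "c powr (- \<sigma>) * (cos (2 * pi * (x / c)) / (x / c) powr \<sigma>) = cos (2 * pi * x / c) / x powr \<sigma>"
    if "x \<in> {0..c}" for x
  proof (cases "x = 0")
    case True
    then show ?thesis by simp
  next
    case False
    then have x: "x > 0" using that by auto
    have "(x / c) powr \<sigma> = x powr \<sigma> / c powr \<sigma>" using x c by (simp add: powr_divide)
    moreover have "c powr (- \<sigma>) = 1 / c powr \<sigma>" by (simp add: powr_minus_divide)
    moreover have "2 * pi * (x / c) = 2 * pi * x / c" by simp
    moreover have gen: "\<And>C P Q::real. P > 0 \<Longrightarrow> Q > 0 \<Longrightarrow> (1 / Q) * (C / (P / Q)) = C / P"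
      by (simp add: field_simps)
    ultimately show ?thesis using x c by (metis gen powr_gt_zero less_le)
  qed
  ultimately show ?thesis unfolding I_def
    using has_integral_cong by (metis (no_types, lifting))
qed

lemma integral_split_unit:
  fixes g :: "real \<Rightarrow> real"
  assumes gi: "g integrable_on {0..real m}" and K: "K \<le> m"
  shows "integral {0..real K} g = (\<Sum>k=1..K. integral {real k - 1..real k} g)"
  using K
proof (induction K)
  case 0
  then show ?case by simp
next
  case (Suc K)
  have "g integrable_on {0..real (Suc K)}"
    by (rule integrable_subinterval_real[OF gi]) (use Suc.prems in auto)
  then have "integral {0..real K} g + integral {real K..real (Suc K)} g = integral {0..real (Suc K)} g"
    using Henstock_Kurzweil_Integration.integral_combine[of 0 "real K" "real (Suc K)" g] by simp
  then show ?case using Suc by simp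
qed

lemma mvt_powr:
  fixes a b p :: real
  assumes "0 < a" "a < b"
  shows "\<exists>z. a < z \<and> z < b \<and> b powr p - a powr p = (b - a) * (p * z powr (p - 1))"
proof -
  have "\<And>x. a \<le> x \<Longrightarrow> x \<le> b \<Longrightarrow> DERIV (\<lambda>x. x powr p) x :> p * x powr (p - 1)"
    using assms by (intro has_real_derivative_powr) auto
  from MVT2[OF assms(2) this] show ?thesis by blast
qed

lemma sum_powr_neg1s:
  assumes s: "0 < \<sigma>" and n: "n \<ge> 1"
  shows "(\<Sum>d=1..n. real d powr (-1 - \<sigma>)) \<le> 1 + 1 / \<sigma> - real n powr (- \<sigma>) / \<sigma>"
  using n
proof (induction n rule: dec_induct)
  case base
  then show ?case by simp
next
  case (step n)
  have n0: "real n > 0" using step by simp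
  obtain z where z: "real n < z" "z < real (Suc n)"
    "real (Suc n) powr (-\<sigma>) - real n powr (-\<sigma>) = (real (Suc n) - real n) * (-\<sigma> * z powr (-\<sigma> - 1))"
    using mvt_powr[OF n0, of "real (Suc n)" "-\<sigma>"] by auto
  have "real (Suc n) powr (-1 - \<sigma>) \<le> z powr (-1 - \<sigma>)"
    using z n0 s by (intro powr_mono2') auto
  then have m: "\<sigma> * real (Suc n) powr (-1 - \<sigma>) \<le> \<sigma> * z powr (-1 - \<sigma>)"
    using s by (simp add: mult_left_mono)
  have e: "z powr (-\<sigma> - 1) = z powr (-1 - \<sigma>)" by (rule arg_cong[where f="\<lambda>t. z powr t"]) simp
  have z3: "real (Suc n) powr (-\<sigma>) - real n powr (-\<sigma>) = - (\<sigma> * z powr (-1 - \<sigma>))"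
    using z(3) unfolding e by simp
  have "\<sigma> * real (Suc n) powr (-1 - \<sigma>) \<le> real n powr (-\<sigma>) - real (Suc n) powr (-\<sigma>)"
    using m z3 by linarith
  then have "real (Suc n) powr (-1 - \<sigma>) \<le> (real n powr (-\<sigma>) - real (Suc n) powr (-\<sigma>)) / \<sigma>"
    using s by (simp add: pos_le_divide_eq mult.commute)
  also have "\<dots> = real n powr (-\<sigma>) / \<sigma> - real (Suc n) powr (-\<sigma>) / \<sigma>"
    by (simp add: diff_divide_distrib)
  finally show ?case using step.IH by simp
qed

lemma sum_powr_neg1s_bound:
  assumes s: "0 < \<sigma>"
  shows "(\<Sum>d=1..n. real d powr (-1 - \<sigma>)) \<le> 1 + 1 / \<sigma>"
proof (cases "n \<ge> 1")
  case True
  have "real n powr (- \<sigma>) / \<sigma> \<ge> 0" using s by simp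
  then show ?thesis using sum_powr_neg1s[OF s True] by linarith
next
  case False
  then have "n = 0" by simp
  then show ?thesis using s by simp
qed

lemma sum_powr_negs:
  assumes s: "0 < \<sigma>" "\<sigma> < 1" and n: "N \<ge> 1"
  shows "(\<Sum>m=1..N. real m powr (- \<sigma>)) \<le> real N powr (1 - \<sigma>) / (1 - \<sigma>)"
  using n
proof (induction N rule: dec_induct)
  case base
  then show ?case using s by (simp add: field_simps)
next
  case (step n)
  have n0: "real n > 0" using step by simp
  obtain z where z: "real n < z" "z < real (Suc n)"
    "real (Suc n) powr (1 - \<sigma>) - real n powr (1 - \<sigma>) = (real (Suc n) - real n) * ((1 - \<sigma>) * z powr (1 - \<sigma> - 1))"
    using mvt_powr[OF n0, of "real (Suc n)" "1 - \<sigma>"] by auto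
  have "real (Suc n) powr (- \<sigma>) \<le> z powr (- \<sigma>)"
    using z n0 s by (intro powr_mono2') auto
  then have m: "(1 - \<sigma>) * real (Suc n) powr (- \<sigma>) \<le> (1 - \<sigma>) * z powr (- \<sigma>)"
    using s by (simp add: mult_left_mono)
  have z3: "real (Suc n) powr (1 - \<sigma>) - real n powr (1 - \<sigma>) = (1 - \<sigma>) * z powr (- \<sigma>)"
    using z(3) by simp
  have "(1 - \<sigma>) * real (Suc n) powr (- \<sigma>) \<le> real (Suc n) powr (1 - \<sigma>) - real n powr (1 - \<sigma>)"
    using m z3 by linarith
  then have "real (Suc n) powr (- \<sigma>) \<le> (real (Suc n) powr (1 - \<sigma>) - real n powr (1 - \<sigma>)) / (1 - \<sigma>)"
    using s by (simp add: pos_le_divide_eq mult.commute)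
  also have "\<dots> = real (Suc n) powr (1 - \<sigma>) / (1 - \<sigma>) - real n powr (1 - \<sigma>) / (1 - \<sigma>)"
    by (simp add: diff_divide_distrib)
  finally show ?case using step.IH by simp
qed

lemma sum_powr_r:
  assumes p: "p > 0" and N: "N \<ge> 1"
  shows "\<bar>(\<Sum>m=1..N. real m powr (p - 1)) - real N powr p / p\<bar> \<le> 1 + 1 / p + real N powr (p - 1)"
proof -
  define D where "D N = (\<Sum>m=1..N. real m powr (p - 1)) - real N powr p / p" for N
  have step: "D (Suc n) - D n = real (Suc n) powr (p - 1) - z powr (p - 1)
     \<and> real n < z \<and> z < real (Suc n)" if z: "real n < z" "z < real (Suc n)"
     "real (Suc n) powr p - real n powr p = (real (Suc n) - real n) * (p * z powr (p - 1))" for n z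
    using z p by (simp add: D_def field_simps)
  show ?thesis
  proof (cases "p \<ge> 1")
    case True
    have "1 - 1 / p \<le> D N \<and> D N \<le> real N powr (p - 1) - 1 / p"
      using N
    proof (induction N rule: dec_induct)
      case base
      then show ?case by (simp add: D_def)
    next
      case (step n)
      have n0: "real n > 0" using step by simp
      obtain z where z: "real n < z" "z < real (Suc n)"
        "real (Suc n) powr p - real n powr p = (real (Suc n) - real n) * (p * z powr (p - 1))"
        using mvt_powr[OF n0, of "real (Suc n)" p] by auto
      have a: "z powr (p - 1) \<le> real (Suc n) powr (p - 1)" "real n powr (p - 1) \<le> z powr (p - 1)"
        using z n0 True by (auto intro!: powr_mono2)
      have "D (Suc n) - D n = real (Suc n) powr (p - 1) - z powr (p - 1)"
        using z p by (simp add: D_def field_simps)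
      then show ?case using a step.IH by linarith
    qed
    moreover have "real N powr (p - 1) \<ge> 0" by simp
    moreover have "1 / p > 0" using p by simp
    ultimately show ?thesis unfolding D_def[symmetric] abs_le_iff by linarith
  next
    case False
    have "real N powr (p - 1) - 1 / p \<le> D N \<and> D N \<le> 1 - 1 / p"
      using N
    proof (induction N rule: dec_induct)
      case base
      then show ?case by (simp add: D_def)
    next
      case (step n)
      have n0: "real n > 0" using step by simp
      obtain z where z: "real n < z" "z < real (Suc n)"
        "real (Suc n) powr p - real n powr p = (real (Suc n) - real n) * (p * z powr (p - 1))"
        using mvt_powr[OF n0, of "real (Suc n)" p] by auto
      have a: "z powr (p - 1) \<ge> real (Suc n) powr (p - 1)" "real n powr (p - 1) \<ge> z powr (p - 1)"
        using z n0 False by (auto intro!: powr_mono2')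
      have "D (Suc n) - D n = real (Suc n) powr (p - 1) - z powr (p - 1)"
        using z p by (simp add: D_def field_simps)
      then show ?case using a step.IH by linarith
    qed
    moreover have "real N powr (p - 1) \<ge> 0" by simp
    moreover have "1 / p > 0" using p by simp
    ultimately show ?thesis unfolding D_def[symmetric] abs_le_iff by linarith
  qed
qed

lemma floor_powr_diff:
  assumes p: "0 < p" "p \<le> 2" and N: "N \<ge> 1" "real N \<le> x" "x < real N + 1"
  shows "\<bar>x powr p - real N powr p\<bar> \<le> 2 * max 1 (x powr (p - 1))"
proof (cases "real N = x")
  case True
  then show ?thesis by simp
next
  case False
  then have lt: "real N < x" using N by simp
  have n0: "real N > 0" using N by simp
  obtain z where z: "real N < z" "z < x" "x powr p - real N powr p = (x - real N) * (p * z powr (p - 1))"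
    using mvt_powr[OF n0 lt, of p] by auto
  have zb: "z powr (p - 1) \<le> max 1 (x powr (p - 1))"
  proof (cases "p \<ge> 1")
    case True
    then have "z powr (p - 1) \<le> x powr (p - 1)" using z n0 by (intro powr_mono2) auto
    then show ?thesis by simp
  next
    case False
    then have "z powr (p - 1) \<le> real N powr (p - 1)" using z n0 by (intro powr_mono2') auto
    also have "\<dots> \<le> 1 powr (p - 1)" using False N by (intro powr_mono2') auto
    finally show ?thesis by simp
  qed
  have "\<bar>x powr p - real N powr p\<bar> = (x - real N) * p * z powr (p - 1)"
    using z lt p by simp
  also have "\<dots> \<le> 1 * 2 * max 1 (x powr (p - 1))"
    using lt N p zb by (intro mult_mono) auto
  finally show ?thesis by simp
qed

lemma T_bound:
  assumes s: "0 < \<sigma>" "\<sigma> < 1" and m: "m \<ge> 1"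
  shows "\<bar>(\<Sum>k=1..m. cos (2 * pi * real k / real m) / real k powr \<sigma>)
           - real m powr (1 - \<sigma>) * integral {0..1} (\<lambda>t. cos (2 * pi * t) / t powr \<sigma>)\<bar>
         \<le> 2 + 1 / (1 - \<sigma>) + 2 * pi"
proof -
  define I where "I = integral {0..1} (\<lambda>t. cos (2 * pi * t) / t powr \<sigma>)"
  define g where "g x = cos (2 * pi * x / real m) / x powr \<sigma>" for x
  have m0: "real m > 0" using m by simp
  have gint: "(g has_integral (real m powr (1 - \<sigma>) * I)) {0..real m}"
    unfolding g_def I_def using g_has_integral[OF s m0] .
  have gi: "g integrable_on {0..real m}" using gint by (auto simp: integrable_on_def)
  define e where "e k = g (real k) - integral {real k - 1..real k} g" for k
  have split: "integral {0..real m} g = (\<Sum>k=1..m. integral {real k - 1..real k} g)"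
    using integral_split_unit[OF gi order.refl] .
  have main: "(\<Sum>k=1..m. cos (2 * pi * real k / real m) / real k powr \<sigma>) - real m powr (1 - \<sigma>) * I
      = (\<Sum>k=1..m. e k)"
  proof -
    have "real m powr (1 - \<sigma>) * I = integral {0..real m} g" using gint by (simp add: integral_unique)
    then show ?thesis unfolding split e_def g_def by (simp add: sum_subtractf)
  qed
  have gik: "g integrable_on {real k - 1..real k}" if "1 \<le> k" "k \<le> m" for k
    by (rule integrable_subinterval_real[OF gi]) (use that in auto)
  have e1: "\<bar>e 1\<bar> \<le> 1 + 1 / (1 - \<sigma>)"
  proof -
    have "\<bar>g 1\<bar> \<le> 1" by (simp add: g_def)
    have pi1: "((\<lambda>x. x powr (- \<sigma>)) has_integral (1 / (1 - \<sigma>))) {0..1}"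
      using powr_neg_has_integral[OF s, of 1] by simp
    have "norm (integral {0..1} g) \<le> integral {0..1} (\<lambda>x. x powr (- \<sigma>))"
    proof (rule integral_norm_bound_integral)
      show "g integrable_on {0..1}" using gik[of 1] m by simp
      show "(\<lambda>x. x powr (- \<sigma>)) integrable_on {0..1}" using pi1 by (auto simp: integrable_on_def)
      fix x assume "x \<in> {0..1::real}"
      then show "norm (g x) \<le> x powr (- \<sigma>)" unfolding g_def using h_bound[of x] by auto
    qed
    also have "\<dots> = 1 / (1 - \<sigma>)" using pi1 by (simp add: integral_unique)
    finally have "\<bar>integral {0..1} g\<bar> \<le> 1 / (1 - \<sigma>)" by simp
    then show ?thesis using \<open>\<bar>g 1\<bar> \<le> 1\<close> unfolding e_def by simp
  qed
  have ek: "\<bar>e k\<bar> \<le> 1 / real (k - 1) powr \<sigma> - 1 / real k powr \<sigma> + 2 * pi / real m"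
    if k: "2 \<le> k" "k \<le> m" for k
  proof -
    define B where "B = 1 / real (k - 1) powr \<sigma> - 1 / real k powr \<sigma> + 2 * pi / real m"
    have km1: "real k - 1 = real (k - 1)" using k by simp
    have hi: "((\<lambda>x. g (real k) - g x) has_integral e k) {real k - 1..real k}"
    proof -
      have "((\<lambda>x. g (real k) - g x) has_integral
          (Henstock_Kurzweil_Integration.content {real k - 1..real k} *\<^sub>R g (real k) - integral {real k - 1..real k} g)) {real k - 1..real k}"
        by (intro has_integral_diff has_integral_const_real integrable_integral gik) (use k in auto)
      then show ?thesis by (simp add: e_def)
    qed
    have pt: "norm (g (real k) - g x) \<le> B" if x: "x \<in> {real k - 1..real k}" for x
    proof -
      have x1: "x \<ge> 1" "real (k - 1) \<le> x" "x \<le> real k" using x k by (auto simp: of_nat_diff)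
      have k1: "real (k - 1) > 0" using k by simp
      define a where "a = 2 * pi * real k / real m"
      define b where "b = 2 * pi * x / real m"
      have xp: "x powr \<sigma> \<ge> 1" using x1 s by (intro ge_one_powr_ge_zero) auto
      have p1: "real (k - 1) powr \<sigma> \<le> x powr \<sigma>" using x1 k1 s by (intro powr_mono2) auto
      have p2: "x powr \<sigma> \<le> real k powr \<sigma>" using x1 s by (intro powr_mono2) auto
      have kp: "real (k - 1) powr \<sigma> > 0" using k1 by simp
      have q1: "1 / real k powr \<sigma> \<le> 1 / x powr \<sigma>"
        using p2 xp k by (intro divide_left_mono) (auto intro!: mult_pos_pos)
      have q2: "1 / x powr \<sigma> \<le> 1 / real (k - 1) powr \<sigma>"
        using p1 kp xp by (intro divide_left_mono) (auto intro!: mult_pos_pos)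
      have split: "g (real k) - g x = cos a * (1 / real k powr \<sigma> - 1 / x powr \<sigma>) + (cos a - cos b) * (1 / x powr \<sigma>)"
      proof -
        have "g (real k) = cos a / real k powr \<sigma>" "g x = cos b / x powr \<sigma>"
          unfolding g_def a_def b_def by simp_all
        then show ?thesis by (simp add: divide_inverse algebra_simps)
      qed
      have t1: "\<bar>cos a * (1 / real k powr \<sigma> - 1 / x powr \<sigma>)\<bar> \<le> 1 / real (k - 1) powr \<sigma> - 1 / real k powr \<sigma>"
      proof -
        have "\<bar>cos a * (1 / real k powr \<sigma> - 1 / x powr \<sigma>)\<bar> \<le> 1 * \<bar>1 / real k powr \<sigma> - 1 / x powr \<sigma>\<bar>"
          unfolding abs_mult by (intro mult_right_mono) auto
        then show ?thesis using q1 q2 by simp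
      qed
      have t2: "\<bar>(cos a - cos b) * (1 / x powr \<sigma>)\<bar> \<le> 2 * pi / real m"
      proof -
        have "\<bar>cos a - cos b\<bar> \<le> \<bar>a - b\<bar>" by (rule abs_cos_diff_le)
        also have "\<bar>a - b\<bar> = 2 * pi * (real k - x) / real m"
          unfolding a_def b_def using x1 m0 by (simp add: field_simps)
        also have "\<dots> \<le> 2 * pi * 1 / real m"
          using x1 m0 by (intro divide_right_mono mult_left_mono) auto
        finally have c1: "\<bar>cos a - cos b\<bar> \<le> 2 * pi / real m" by simp
        have c2: "\<bar>1 / x powr \<sigma>\<bar> \<le> 1" using xp by (simp add: divide_le_eq)
        have "\<bar>(cos a - cos b) * (1 / x powr \<sigma>)\<bar> \<le> (2 * pi / real m) * 1"
          unfolding abs_mult by (intro mult_mono c1 c2) auto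
        then show ?thesis by simp
      qed
      show ?thesis unfolding real_norm_def split B_def
        using t1 t2 abs_triangle_ineq[of "cos a * (1 / real k powr \<sigma> - 1 / x powr \<sigma>)" "(cos a - cos b) * (1 / x powr \<sigma>)"]
        by linarith
    qed
    have B0: "0 \<le> B"
    proof -
      have "real (k - 1) powr \<sigma> \<le> real k powr \<sigma>" using k s by (intro powr_mono2) auto
      then have "1 / real k powr \<sigma> \<le> 1 / real (k - 1) powr \<sigma>"
        using k by (intro divide_left_mono) auto
      moreover have "0 \<le> 2 * pi / real m" using m0 by simp
      ultimately show ?thesis unfolding B_def by linarith
    qed
    have "norm (e k) \<le> B * Henstock_Kurzweil_Integration.content {real k - 1..real k}"
      by (rule has_integral_bound_real[OF B0 _ hi, of "{}"]) (use pt in auto)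
    then show ?thesis unfolding B_def by simp
  qed
  have inv: "(\<Sum>k=1..K. \<bar>e k\<bar>) \<le> 2 + 1 / (1 - \<sigma>) - 1 / real K powr \<sigma> + 2 * pi * real K / real m"
    if "1 \<le> K" "K \<le> m" for K
    using that
  proof (induction K rule: dec_induct)
    case base
    have "0 \<le> 2 * pi / real m" using m0 by simp
    then show ?case using e1 by (simp add: add_increasing2)
  next
    case (step K)
    have "\<bar>e (Suc K)\<bar> \<le> 1 / real K powr \<sigma> - 1 / real (Suc K) powr \<sigma> + 2 * pi / real m"
      using ek[of "Suc K"] step by simp
    moreover have "2 * pi * real (Suc K) / real m = 2 * pi * real K / real m + 2 * pi / real m"
      by (simp add: add_divide_distrib distrib_left)
    ultimately show ?case using step by simp
  qed
  have "\<bar>\<Sum>k=1..m. e k\<bar> \<le> (\<Sum>k=1..m. \<bar>e k\<bar>)" by (rule sum_abs)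
  also have "\<dots> \<le> 2 + 1 / (1 - \<sigma>) - 1 / real m powr \<sigma> + 2 * pi * real m / real m"
    using inv[OF m order.refl] .
  also have "\<dots> \<le> 2 + 1 / (1 - \<sigma>) + 2 * pi" using m0 by simp
  finally show ?thesis using main unfolding I_def by simp
qed

lemma G_eq:
  "G s N = (\<Sum>m=1..N. (\<Sum>j=1..m. cos (2 * pi * real j / real m) / real j powr s) / real m powr s)"
proof -
  have P: "pairs N = (\<lambda>(m, j). (j, m)) ` (SIGMA m:{1..N}. {1..m})"
    by (auto simp: pairs_def image_iff)
  have inj: "inj_on (\<lambda>(m, j). (j, m)) (SIGMA m:{1..N}. {1..m})" by (auto simp: inj_on_def)
  have "G s N = (\<Sum>(m, j)\<in>(SIGMA m:{1..N}. {1..m}). fj s j m)"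
    unfolding G_def P by (subst sum.reindex[OF inj]) (simp add: case_prod_beta)
  also have "\<dots> = (\<Sum>m=1..N. \<Sum>j=1..m. fj s j m)"
    by (subst sum.Sigma) auto
  also have "\<dots> = (\<Sum>m=1..N. (\<Sum>j=1..m. cos (2 * pi * real j / real m) / real j powr s) / real m powr s)"
  proof (rule sum.cong[OF refl])
    fix m assume "m \<in> {1..N}"
    have "fj s j m = cos (2 * pi * real j / real m) / real j powr s / real m powr s" for j
      unfolding fj_def by (simp add: powr_mult divide_divide_eq_left)
    then show "(\<Sum>j=1..m. fj s j m) = (\<Sum>j=1..m. cos (2 * pi * real j / real m) / real j powr s) / real m powr s"
      by (simp add: sum_divide_distrib)
  qed
  finally show ?thesis .
qed

lemma G_bound:
  assumes s: "0 < \<sigma>" "\<sigma> < 1"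
  defines "I \<equiv> integral {0..1} (\<lambda>t. cos (2 * pi * t) / t powr \<sigma>)"
  shows "\<exists>K. \<forall>N\<ge>1. \<bar>G \<sigma> N - I / (2 - 2 * \<sigma>) * real N powr (2 - 2 * \<sigma>)\<bar> \<le> K * real N powr (1 - \<sigma>)"
proof -
  define C1 where "C1 = 2 + 1 / (1 - \<sigma>) + 2 * pi"
  define p where "p = 2 - 2 * \<sigma>"
  have p: "p > 0" "p \<le> 2" "p - 1 = 1 - 2 * \<sigma>" using s by (auto simp: p_def)
  define T where "T m = (\<Sum>j=1..m. cos (2 * pi * real j / real m) / real j powr \<sigma>)" for m
  have TB: "\<bar>T m - real m powr (1 - \<sigma>) * I\<bar> \<le> C1" if "m \<ge> 1" for m
    unfolding T_def I_def C1_def using T_bound[OF s that] .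
  have C1: "C1 \<ge> 0" using s by (simp add: C1_def)
  show ?thesis
  proof (intro exI allI impI)
    fix N :: nat assume N: "N \<ge> 1"
    have N0: "real N > 0" using N by simp
    have pw: "real m powr (1 - \<sigma>) / real m powr \<sigma> = real m powr (p - 1)" for m
      unfolding p(3) by (simp add: powr_diff[symmetric] algebra_simps)
    have "G \<sigma> N - I * (\<Sum>m=1..N. real m powr (p - 1))
        = (\<Sum>m=1..N. (T m - real m powr (1 - \<sigma>) * I) / real m powr \<sigma>)"
      unfolding G_eq T_def[symmetric]
      by (simp add: sum_distrib_left sum_subtractf[symmetric] diff_divide_distrib pw[symmetric] mult_ac)
    also have "\<bar>\<dots>\<bar> \<le> (\<Sum>m=1..N. C1 * real m powr (- \<sigma>))"
    proof -
      have "\<bar>(\<Sum>m=1..N. (T m - real m powr (1 - \<sigma>) * I) / real m powr \<sigma>)\<bar>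
          \<le> (\<Sum>m=1..N. \<bar>(T m - real m powr (1 - \<sigma>) * I) / real m powr \<sigma>\<bar>)" by (rule sum_abs)
      also have "\<dots> \<le> (\<Sum>m=1..N. C1 * real m powr (- \<sigma>))"
      proof (rule sum_mono)
        fix m assume m: "m \<in> {1..N}"
        have "\<bar>(T m - real m powr (1 - \<sigma>) * I) / real m powr \<sigma>\<bar>
            = \<bar>T m - real m powr (1 - \<sigma>) * I\<bar> * real m powr (- \<sigma>)"
          by (simp add: powr_minus_divide abs_divide divide_inverse abs_mult)
        also have "\<dots> \<le> C1 * real m powr (- \<sigma>)"
          using TB[of m] m by (intro mult_right_mono) auto
        finally show "\<bar>(T m - real m powr (1 - \<sigma>) * I) / real m powr \<sigma>\<bar> \<le> C1 * real m powr (- \<sigma>)" .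
      qed
      finally show ?thesis .
    qed
    also have "\<dots> = C1 * (\<Sum>m=1..N. real m powr (- \<sigma>))" by (simp add: sum_distrib_left)
    also have "\<dots> \<le> C1 * (real N powr (1 - \<sigma>) / (1 - \<sigma>))"
      using sum_powr_negs[OF s N] C1 by (intro mult_left_mono) auto
    finally have A: "\<bar>G \<sigma> N - I * (\<Sum>m=1..N. real m powr (p - 1))\<bar> \<le> C1 / (1 - \<sigma>) * real N powr (1 - \<sigma>)"
      by simp
    have B0: "\<bar>(\<Sum>m=1..N. real m powr (p - 1)) - real N powr p / p\<bar> \<le> 1 + 1 / p + real N powr (p - 1)"
      using sum_powr_r[OF p(1) N] .
    have n1: "1 \<le> real N powr (1 - \<sigma>)" using N s by (intro ge_one_powr_ge_zero) auto
    have n2: "real N powr (p - 1) \<le> real N powr (1 - \<sigma>)" using N s p by (intro powr_mono) auto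
    have "1 + 1 / p + real N powr (p - 1) \<le> (2 + 1 / p) * real N powr (1 - \<sigma>)"
    proof -
      have "1 / p \<le> 1 / p * real N powr (1 - \<sigma>)" using mult_left_mono[OF n1, of "1 / p"] p(1) by simp
      then show ?thesis using n1 n2 by (simp add: algebra_simps)
    qed
    with B0 have B: "\<bar>(\<Sum>m=1..N. real m powr (p - 1)) - real N powr p / p\<bar> \<le> (2 + 1 / p) * real N powr (1 - \<sigma>)"
      by linarith
    have "\<bar>I * (\<Sum>m=1..N. real m powr (p - 1)) - I / p * real N powr p\<bar>
        = \<bar>I\<bar> * \<bar>(\<Sum>m=1..N. real m powr (p - 1)) - real N powr p / p\<bar>"
      by (simp add: abs_mult[symmetric] algebra_simps)
    also have "\<dots> \<le> \<bar>I\<bar> * ((2 + 1 / p) * real N powr (1 - \<sigma>))"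
      using B by (intro mult_left_mono) auto
    finally have B2: "\<bar>I * (\<Sum>m=1..N. real m powr (p - 1)) - I / p * real N powr p\<bar>
        \<le> \<bar>I\<bar> * (2 + 1 / p) * real N powr (1 - \<sigma>)" by (simp add: mult.assoc)
    have "\<bar>G \<sigma> N - I / p * real N powr p\<bar> \<le> (C1 / (1 - \<sigma>) + \<bar>I\<bar> * (2 + 1 / p)) * real N powr (1 - \<sigma>)"
      using A B2 by (simp add: algebra_simps abs_triangle_ineq4)
    then show "\<bar>G \<sigma> N - I / (2 - 2 * \<sigma>) * real N powr (2 - 2 * \<sigma>)\<bar>
        \<le> (C1 / (1 - \<sigma>) + \<bar>I\<bar> * (2 + 1 / (2 - 2 * \<sigma>))) * real N powr (1 - \<sigma>)"
      unfolding p_def .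
  qed
qed

definition Z :: "nat \<Rightarrow> real" where "Z N = (\<Sum>k=1..N. 1 / real k ^ 2)"

lemma zeta_summable: "summable (\<lambda>k. 1 / (real (Suc k))\<^sup>2)"
proof -
  have "summable (\<lambda>n. inverse (real n ^ 2))" by (rule inverse_power_summable) simp
  then have "summable (\<lambda>n. inverse (real (Suc n) ^ 2))" by (subst summable_Suc_iff)
  then show ?thesis by (simp add: inverse_eq_divide)
qed

lemma Z_shift: "(\<Sum>i<N. 1 / (real (Suc i))\<^sup>2) = Z N"
  unfolding Z_def by (induction N) (auto simp: atLeastAtMostSuc_conv)

lemma zeta_tail:
  assumes N: "N \<ge> 1"
  shows "0 \<le> zeta2 - Z N" "zeta2 - Z N \<le> 1 / real N"
proof -
  define f where "f k = 1 / (real (Suc k))\<^sup>2" for k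
  have fs: "summable f" unfolding f_def by (rule zeta_summable)
  have z0: "zeta2 = suminf f" by (simp add: zeta2_def f_def[abs_def])
  have z1: "(\<Sum>i<N. f i) = Z N" unfolding f_def by (rule Z_shift)
  have z: "zeta2 = (\<Sum>n. f (n + N)) + Z N"
    using suminf_split_initial_segment[OF fs, of N] z0 z1 by simp
  have ts: "summable (\<lambda>n. f (n + N))" using fs by (simp add: summable_iff_shift)
  show "0 \<le> zeta2 - Z N" using z suminf_nonneg[OF ts] by (simp add: f_def)
  have lim: "(\<lambda>n. 1 / real (n + N)) \<longlonglongrightarrow> 0"
    using LIMSEQ_ignore_initial_segment[OF lim_inverse_n', of N] by simp
  have tel: "(\<lambda>n. 1 / real (n + N) - 1 / real (Suc n + N)) sums (1 / real (0 + N) - 0)"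
    using telescope_sums'[OF lim] by simp
  have le: "f (n + N) \<le> 1 / real (n + N) - 1 / real (Suc n + N)" for n
  proof -
    define a where "a = real (n + N)"
    have a: "a \<ge> 1" using N by (simp add: a_def)
    have "1 / a - 1 / (a + 1) = 1 / (a * (a + 1))" using a by (simp add: field_simps)
    moreover have "1 / (a + 1)\<^sup>2 \<le> 1 / (a * (a + 1))"
      using a by (intro divide_left_mono) (auto simp: power2_eq_square intro!: mult_pos_pos)
    moreover have "f (n + N) = 1 / (a + 1)\<^sup>2" by (simp add: f_def a_def add_ac)
    moreover have e1: "real (Suc n + N) = a + 1" by (simp add: a_def)
    moreover have e2: "real (n + N) = a" by (simp add: a_def)
    ultimately show ?thesis unfolding e1 e2 by linarith
  qed
  have "(\<Sum>n. f (n + N)) \<le> 1 / real N"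
    using sums_le[OF le summable_sums[OF ts] tel] by simp
  then show "zeta2 - Z N \<le> 1 / real N" using z by simp
qed

lemma zeta_ge1: "zeta2 \<ge> 1"
  using zeta_tail(1)[of 1] by (simp add: Z_def)

lemma Z_inv:
  assumes n: "n \<ge> 1"
  shows "(\<Sum>d=1..n. mu d * (Z (n div d) / (real d)\<^sup>2)) = 1"
proof -
  have "(\<Sum>d=1..n. mu d * (\<Sum>k\<in>{k\<in>{1..n}. d dvd id k}. 1 / (real k)\<^sup>2))
      = (\<Sum>k\<in>{k\<in>{1..n}. id k = 1}. 1 / (real k)\<^sup>2)"
    by (rule mu_inversion) auto
  also have "{k\<in>{1..n}. id k = 1} = {1}" using n by auto
  also have "(\<Sum>k\<in>{k\<in>{1..n}. d dvd id k}. 1 / (real k)\<^sup>2) = Z (n div d) / (real d)\<^sup>2"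
    if d: "d \<in> {1..n}" for d
  proof -
    have d0: "d > 0" using d by simp
    have S: "{k\<in>{1..n}. d dvd id k} = (\<lambda>e. d * e) ` {1..n div d}"
    proof (rule set_eqI, rule iffI)
      fix k assume "k \<in> {k\<in>{1..n}. d dvd id k}"
      then have k: "1 \<le> k" "k \<le> n" "d dvd k" by auto
      then obtain e where e: "k = d * e" by (meson dvdE)
      have "1 \<le> e" using k e by (cases e) auto
      moreover have "e \<le> n div d" using k e d0 by (simp add: less_eq_div_iff_mult_less_eq mult.commute)
      ultimately show "k \<in> (\<lambda>e. d * e) ` {1..n div d}" using e by auto
    next
      fix k assume "k \<in> (\<lambda>e. d * e) ` {1..n div d}"
      then obtain e where e0: "e \<in> {1..n div d}" and e1: "k = d * e" by (rule imageE)
      then have e: "k = d * e" "1 \<le> e" "e \<le> n div d" by auto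
      then have "1 \<le> d * e" "d * e \<le> n" using d0
        by (auto simp: less_eq_div_iff_mult_less_eq mult.commute)
      then show "k \<in> {k\<in>{1..n}. d dvd id k}" using e by auto
    qed
    have inj: "inj_on (\<lambda>e. d * e) {1..n div d}" using d0 by (auto simp: inj_on_def)
    have "(\<Sum>k\<in>{k\<in>{1..n}. d dvd id k}. 1 / (real k)\<^sup>2) = (\<Sum>e=1..n div d. 1 / (real (d * e))\<^sup>2)"
      unfolding S by (subst sum.reindex[OF inj]) simp
    also have "\<dots> = (\<Sum>e=1..n div d. 1 / (real e)\<^sup>2 / (real d)\<^sup>2)"
      by (simp add: power_mult_distrib divide_divide_eq_left mult.commute)
    also have "\<dots> = Z (n div d) / (real d)\<^sup>2" by (simp add: Z_def sum_divide_distrib)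
    finally show ?thesis .
  qed
  ultimately show ?thesis by simp
qed

lemma pw1:
  fixes n d p :: real
  assumes "n > 0" "d > 0"
  shows "n powr p / d\<^sup>2 = (n / d) powr p / d powr (2 - p)"
proof -
  have "d\<^sup>2 = d powr 2" using assms by (simp add: powr_numeral)
  also have "\<dots> = d powr (p + (2 - p))" by simp
  also have "\<dots> = d powr p * d powr (2 - p)" by (rule powr_add)
  finally have e: "d\<^sup>2 = d powr p * d powr (2 - p)" .
  show ?thesis unfolding e using assms by (simp add: powr_divide divide_divide_eq_left)
qed

lemma pw2:
  fixes n d s :: real
  assumes "n > 0" "d > 0"
  shows "(n / d) powr (1 - s) / d powr (2 * s) = n powr (1 - s) * d powr (-1 - s)"
proof -
  have "d powr (1 + s) = d powr ((1 - s) + 2 * s)" by (rule arg_cong[where f="\<lambda>t. d powr t"]) simp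
  also have "\<dots> = d powr (1 - s) * d powr (2 * s)" by (rule powr_add)
  finally have "d powr (1 - s) * d powr (2 * s) = d powr (1 + s)" by simp
  moreover have "d powr (-1 - s) = 1 / d powr (1 + s)"
    by (simp add: powr_minus_divide[symmetric])
  ultimately show ?thesis using assms by (simp add: powr_divide divide_divide_eq_left)
qed

lemma pw3:
  fixes n d s :: real
  assumes "n > 0" "d > 0"
  shows "(d / n) powr (1 - s) / d\<^sup>2 = d powr (-1 - s) / n powr (1 - s)"
proof -
  have "d\<^sup>2 = d powr 2" using assms by (simp add: powr_numeral)
  have "d powr (1 - s) / d powr 2 = d powr (-1 - s)"
    by (simp add: powr_diff[symmetric])
  moreover have "(d / n) powr (1 - s) = d powr (1 - s) / n powr (1 - s)" using assms by (simp add: powr_divide)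
  moreover have E: "\<And>a b c :: real. a / b / c = a / c / b" by (simp only: divide_divide_eq_left mult.commute)
  ultimately show ?thesis using \<open>d\<^sup>2 = d powr 2\<close> by (metis E)
qed

lemma pw4:
  fixes n s :: real
  assumes "n > 0"
  shows "n powr (2 - 2 * s) / n powr (1 - s) = n powr (1 - s)"
  by (simp add: powr_diff[symmetric])

lemma div_facts:
  assumes d: "d \<in> {1..n}"
  shows "n div d \<ge> 1" "real (n div d) \<le> real n / real d" "real n / real d < real (n div d) + 1"
    "real n / real d \<ge> 1"
proof -
  have d0: "d > 0" using d by simp
  show "n div d \<ge> 1" using d by (simp add: Suc_le_eq div_greater_zero_iff)
  show "real (n div d) \<le> real n / real d" by (rule of_nat_div_le_of_nat)
  have "n = d * (n div d) + n mod d" by simp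
  then have "real n = real d * real (n div d) + real (n mod d)" by (metis of_nat_add of_nat_mult)
  moreover have "real (n mod d) < real d" using d0 by simp
  ultimately have "real n < real d * (real (n div d) + 1)" by (simp add: algebra_simps)
  then show "real n / real d < real (n div d) + 1" using d0 by (simp add: divide_less_eq mult.commute)
  show "real n / real d \<ge> 1" using d by simp
qed

theorem theorem2p8:
  fixes \<sigma> :: real
  assumes "0 < \<sigma>" and "\<sigma> < 1"
  shows "\<exists>C. \<forall>n::nat. n \<ge> 1 \<longrightarrow>
           \<bar>F_sum n \<sigma> - real n powr (2 * (1 - \<sigma>)) / (2 * (1 - \<sigma>) * zeta2)
                * (LBINT t=0..1. cos (2 * pi * t) / t powr \<sigma>)\<bar>
           \<le> C * real n powr (1 - \<sigma>)"
proof -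
  note s = assms
  define I where "I = integral {0..1} (\<lambda>t. cos (2 * pi * t) / t powr \<sigma>)"
  have LB: "(LBINT t=0..1. cos (2 * pi * t) / t powr \<sigma>) = I"
    using h_integrable_LBINT(2)[OF s] unfolding I_def .
  define p where "p = 2 - 2 * \<sigma>"
  have p: "p > 0" "p \<le> 2" "p - 1 \<le> 1 - \<sigma>" "2 - p = 2 * \<sigma>" "2 * (1 - \<sigma>) = p" using s by (auto simp: p_def)
  define A where "A = I / p"
  obtain K where K: "\<And>N. N \<ge> 1 \<Longrightarrow> \<bar>G \<sigma> N - I / (2 - 2 * \<sigma>) * real N powr (2 - 2 * \<sigma>)\<bar> \<le> K * real N powr (1 - \<sigma>)"
    using G_bound[OF s] unfolding I_def by blast
  define K' where "K' = \<bar>K\<bar>"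
  have KN: "\<bar>G \<sigma> N - A * real N powr p\<bar> \<le> K' * real N powr (1 - \<sigma>)" if "N \<ge> 1" for N
  proof -
    have "K * real N powr (1 - \<sigma>) \<le> K' * real N powr (1 - \<sigma>)"
      unfolding K'_def by (intro mult_right_mono) auto
    then show ?thesis using K[OF that] unfolding A_def p_def by simp
  qed
  define S where "S = 1 + 1 / \<sigma>"
  have Sb: "(\<Sum>d=1..n. real d powr (-1 - \<sigma>)) \<le> S" for n
    unfolding S_def by (rule sum_powr_neg1s_bound[OF s(1)])
  have S0: "S \<ge> 0" using s by (simp add: S_def)
  define C where "C = (K' + 2 * \<bar>A\<bar>) * S + 2 * \<bar>A\<bar> * S"
  show ?thesis
  proof (intro exI allI impI)
    fix n :: nat assume n: "n \<ge> 1"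
    have n0: "real n > 0" using n by simp
    define P where "P = (\<Sum>d=1..n. mu d / (real d)\<^sup>2)"
    have term1: "\<bar>G \<sigma> (n div d) / real d powr (2 * \<sigma>) - A * (real n powr p / (real d)\<^sup>2)\<bar>
        \<le> (K' + 2 * \<bar>A\<bar>) * real n powr (1 - \<sigma>) * real d powr (-1 - \<sigma>)" if d: "d \<in> {1..n}" for d
    proof -
      have d0: "real d > 0" using d by simp
      define x where "x = real n / real d"
      define N where "N = n div d"
      note df = div_facts[OF d, folded x_def N_def]
      have x0: "x > 0" using df by simp
      have a1: "\<bar>G \<sigma> N - A * real N powr p\<bar> \<le> K' * real N powr (1 - \<sigma>)" using KN df by simp
      have a2: "\<bar>x powr p - real N powr p\<bar> \<le> 2 * max 1 (x powr (p - 1))"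
        using floor_powr_diff[OF p(1,2) df(1) df(2) df(3)] .
      have a3: "real N powr (1 - \<sigma>) \<le> x powr (1 - \<sigma>)" using df s by (intro powr_mono2) auto
      have a4: "max 1 (x powr (p - 1)) \<le> x powr (1 - \<sigma>)"
      proof -
        have "1 \<le> x powr (1 - \<sigma>)" using df s by (intro ge_one_powr_ge_zero) auto
        moreover have "x powr (p - 1) \<le> x powr (1 - \<sigma>)" using df p by (intro powr_mono) auto
        ultimately show ?thesis by simp
      qed
      have K'0: "K' \<ge> 0" by (simp add: K'_def)
      have "\<bar>G \<sigma> N - A * x powr p\<bar> \<le> \<bar>G \<sigma> N - A * real N powr p\<bar> + \<bar>A\<bar> * \<bar>x powr p - real N powr p\<bar>"
      proof -
        have "G \<sigma> N - A * x powr p = (G \<sigma> N - A * real N powr p) - A * (x powr p - real N powr p)"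
          by (simp add: algebra_simps)
        then show ?thesis by (metis abs_mult abs_triangle_ineq4)
      qed
      also have "\<dots> \<le> K' * x powr (1 - \<sigma>) + \<bar>A\<bar> * (2 * x powr (1 - \<sigma>))"
      proof (intro add_mono mult_left_mono)
        show "\<bar>G \<sigma> N - A * real N powr p\<bar> \<le> K' * x powr (1 - \<sigma>)"
          using a1 mult_left_mono[OF a3 K'0] by linarith
        show "\<bar>x powr p - real N powr p\<bar> \<le> 2 * x powr (1 - \<sigma>)" using a2 a4 by linarith
      qed auto
      finally have b: "\<bar>G \<sigma> N - A * x powr p\<bar> \<le> (K' + 2 * \<bar>A\<bar>) * x powr (1 - \<sigma>)"
        by (simp add: algebra_simps)
      have dp: "real d powr (2 * \<sigma>) > 0" using d0 by simp
      have "A * (real n powr p / (real d)\<^sup>2) = A * x powr p / real d powr (2 * \<sigma>)"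
        unfolding x_def pw1[OF n0 d0, of p] p(4) by simp
      then have "\<bar>G \<sigma> N / real d powr (2 * \<sigma>) - A * (real n powr p / (real d)\<^sup>2)\<bar>
          = \<bar>G \<sigma> N - A * x powr p\<bar> / real d powr (2 * \<sigma>)"
        using dp by (simp add: diff_divide_distrib[symmetric] abs_divide)
      also have "\<dots> \<le> (K' + 2 * \<bar>A\<bar>) * x powr (1 - \<sigma>) / real d powr (2 * \<sigma>)"
        using b dp by (intro divide_right_mono) auto
      also have "\<dots> = (K' + 2 * \<bar>A\<bar>) * real n powr (1 - \<sigma>) * real d powr (-1 - \<sigma>)"
        unfolding x_def by (simp only: times_divide_eq_right[symmetric] pw2[OF n0 d0] mult.assoc)
      finally show ?thesis unfolding N_def .
    qed
    have eq1: "F_sum n \<sigma> - A * real n powr p * P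
        = (\<Sum>d=1..n. mu d * (G \<sigma> (n div d) / real d powr (2 * \<sigma>) - A * (real n powr p / (real d)\<^sup>2)))"
      unfolding F_inv[OF n] P_def
      by (simp add: sum_distrib_left sum_subtractf right_diff_distrib mult_ac)
    have c1: "\<bar>F_sum n \<sigma> - A * real n powr p * P\<bar> \<le> (K' + 2 * \<bar>A\<bar>) * S * real n powr (1 - \<sigma>)"
    proof -
      have "\<bar>F_sum n \<sigma> - A * real n powr p * P\<bar>
          \<le> (\<Sum>d=1..n. \<bar>mu d * (G \<sigma> (n div d) / real d powr (2 * \<sigma>) - A * (real n powr p / (real d)\<^sup>2))\<bar>)"
        unfolding eq1 by (rule sum_abs)
      also have "\<dots> \<le> (\<Sum>d=1..n. (K' + 2 * \<bar>A\<bar>) * real n powr (1 - \<sigma>) * real d powr (-1 - \<sigma>))"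
      proof (rule sum_mono)
        fix d assume d: "d \<in> {1..n}"
        have "\<bar>mu d * (G \<sigma> (n div d) / real d powr (2 * \<sigma>) - A * (real n powr p / (real d)\<^sup>2))\<bar>
            \<le> 1 * \<bar>G \<sigma> (n div d) / real d powr (2 * \<sigma>) - A * (real n powr p / (real d)\<^sup>2)\<bar>"
          unfolding abs_mult by (intro mult_right_mono mu_abs_le) auto
        then show "\<bar>mu d * (G \<sigma> (n div d) / real d powr (2 * \<sigma>) - A * (real n powr p / (real d)\<^sup>2))\<bar>
            \<le> (K' + 2 * \<bar>A\<bar>) * real n powr (1 - \<sigma>) * real d powr (-1 - \<sigma>)"
          using term1[OF d] by (simp only: mult_1)
      qed
      also have "\<dots> = (K' + 2 * \<bar>A\<bar>) * real n powr (1 - \<sigma>) * (\<Sum>d=1..n. real d powr (-1 - \<sigma>))"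
        by (simp add: sum_distrib_left)
      also have "\<dots> \<le> (K' + 2 * \<bar>A\<bar>) * real n powr (1 - \<sigma>) * S"
        using Sb[of n] by (intro mult_left_mono) (auto simp: K'_def)
      finally show ?thesis by (simp add: mult_ac)
    qed
    have term2: "\<bar>mu d * ((zeta2 - Z (n div d)) / (real d)\<^sup>2)\<bar> \<le> 2 * (real d powr (-1 - \<sigma>) / real n powr (1 - \<sigma>))"
      if d: "d \<in> {1..n}" for d
    proof -
      have d0: "real d > 0" using d by simp
      define N where "N = n div d"
      note df = div_facts[OF d, folded N_def]
      have N0: "real N \<ge> 1" using df by simp
      have z: "0 \<le> zeta2 - Z N" "zeta2 - Z N \<le> 1 / real N" using zeta_tail[OF df(1)] by auto
      have "real n / real d < 2 * real N" using df N0 by linarith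
      then have "1 / real N \<le> 2 * (real d / real n)" using d0 n0 N0 by (simp add: field_simps)
      also have "real d / real n \<le> (real d / real n) powr (1 - \<sigma>)"
      proof -
        have "(real d / real n) powr 1 \<le> (real d / real n) powr (1 - \<sigma>)"
          using d s by (intro powr_mono') auto
        then show ?thesis using d0 n0 by simp
      qed
      finally have e: "zeta2 - Z N \<le> 2 * (real d / real n) powr (1 - \<sigma>)" using z(2) by linarith
      have "\<bar>mu d * ((zeta2 - Z N) / (real d)\<^sup>2)\<bar> \<le> 1 * ((zeta2 - Z N) / (real d)\<^sup>2)"
      proof -
        have ab: "\<bar>(zeta2 - Z N) / (real d)\<^sup>2\<bar> = (zeta2 - Z N) / (real d)\<^sup>2" using z(1) by simp
        show ?thesis unfolding abs_mult ab by (intro mult_right_mono mu_abs_le) (use z(1) in simp)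
      qed
      also have "\<dots> \<le> 2 * (real d / real n) powr (1 - \<sigma>) / (real d)\<^sup>2"
        using e by (simp add: divide_right_mono)
      also have "\<dots> = 2 * (real d powr (-1 - \<sigma>) / real n powr (1 - \<sigma>))"
        using pw3[OF n0 d0, of \<sigma>] by simp
      finally show ?thesis unfolding N_def .
    qed
    have eq2: "zeta2 * P - 1 = (\<Sum>d=1..n. mu d * ((zeta2 - Z (n div d)) / (real d)\<^sup>2))"
    proof -
      have "zeta2 * P - 1 = zeta2 * P - (\<Sum>d=1..n. mu d * (Z (n div d) / (real d)\<^sup>2))"
        using Z_inv[OF n] by simp
      then show ?thesis unfolding P_def
        by (simp add: sum_distrib_left sum_subtractf[symmetric] diff_divide_distrib right_diff_distrib mult_ac)
    qed
    have c2': "\<bar>zeta2 * P - 1\<bar> \<le> 2 * S / real n powr (1 - \<sigma>)"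
    proof -
      have "\<bar>zeta2 * P - 1\<bar> \<le> (\<Sum>d=1..n. \<bar>mu d * ((zeta2 - Z (n div d)) / (real d)\<^sup>2)\<bar>)"
        unfolding eq2 by (rule sum_abs)
      also have "\<dots> \<le> (\<Sum>d=1..n. 2 * (real d powr (-1 - \<sigma>) / real n powr (1 - \<sigma>)))"
        using term2 by (intro sum_mono) auto
      also have "\<dots> = 2 * (\<Sum>d=1..n. real d powr (-1 - \<sigma>)) / real n powr (1 - \<sigma>)"
        by (simp add: sum_distrib_left sum_divide_distrib)
      also have "\<dots> \<le> 2 * S / real n powr (1 - \<sigma>)"
        using Sb[of n] n0 by (intro divide_right_mono) auto
      finally show ?thesis .
    qed
    have z1: "zeta2 \<ge> 1" by (rule zeta_ge1)
    have c2: "\<bar>A * real n powr p * P - A * real n powr p / zeta2\<bar> \<le> 2 * \<bar>A\<bar> * S * real n powr (1 - \<sigma>)"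
    proof -
      have "A * real n powr p * P - A * real n powr p / zeta2 = A * real n powr p * (zeta2 * P - 1) / zeta2"
        using z1 by (simp add: field_simps)
      then have "\<bar>A * real n powr p * P - A * real n powr p / zeta2\<bar>
          = \<bar>A\<bar> * real n powr p * \<bar>zeta2 * P - 1\<bar> / zeta2"
        using z1 by (simp add: abs_mult abs_divide)
      also have "\<dots> \<le> \<bar>A\<bar> * real n powr p * \<bar>zeta2 * P - 1\<bar>"
      proof -
        have X0: "0 \<le> \<bar>A\<bar> * real n powr p * \<bar>zeta2 * P - 1\<bar>" by simp
        show ?thesis using divide_left_mono[OF z1 X0] z1 by simp
      qed
      also have "\<dots> \<le> \<bar>A\<bar> * real n powr p * (2 * S / real n powr (1 - \<sigma>))"
        using c2' by (intro mult_left_mono) auto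
      also have "\<dots> = 2 * \<bar>A\<bar> * S * (real n powr p / real n powr (1 - \<sigma>))"
        by (simp add: field_simps)
      also have "real n powr p / real n powr (1 - \<sigma>) = real n powr (1 - \<sigma>)"
        unfolding p_def by (rule pw4[OF n0])
      finally show ?thesis .
    qed
    have tgt: "real n powr (2 * (1 - \<sigma>)) / (2 * (1 - \<sigma>) * zeta2) * (LBINT t=0..1. cos (2 * pi * t) / t powr \<sigma>)
        = A * real n powr p / zeta2"
      unfolding LB p(5) A_def by (simp add: field_simps)
    have "\<bar>F_sum n \<sigma> - A * real n powr p / zeta2\<bar>
        \<le> \<bar>F_sum n \<sigma> - A * real n powr p * P\<bar> + \<bar>A * real n powr p * P - A * real n powr p / zeta2\<bar>"
      using abs_triangle_ineq[of "F_sum n \<sigma> - A * real n powr p * P" "A * real n powr p * P - A * real n powr p / zeta2"]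
      by simp
    also have "\<dots> \<le> (K' + 2 * \<bar>A\<bar>) * S * real n powr (1 - \<sigma>) + 2 * \<bar>A\<bar> * S * real n powr (1 - \<sigma>)"
      using c1 c2 by (rule add_mono)
    also have "\<dots> = C * real n powr (1 - \<sigma>)" by (simp add: C_def algebra_simps)
    finally show "\<bar>F_sum n \<sigma> - real n powr (2 * (1 - \<sigma>)) / (2 * (1 - \<sigma>) * zeta2)
                * (LBINT t=0..1. cos (2 * pi * t) / t powr \<sigma>)\<bar> \<le> C * real n powr (1 - \<sigma>)"
      unfolding tgt .
  qed
qed

end
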